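(* Let $U$ be a finite nonempty set, $R$ an equivalence relation on $U$, and $M(R)$ the support matroid induced by $R$. For every $X\subseteq U$, $X$ is a closed set of $M(R)$ if and only if $R_{*}(X)=X$.
   Context: For $x\in U$, $RN(x)=\{y\in U\mid xRy\}$; $R_{*}(X)=\{x\in U\mid RN(x)\subseteq X\}$ and $R^{*}(X)=\{x\in U\mid RN(x)\cap X\neq\emptyset\}$. Let $\mathbf{S}(R)=\{X\subseteq U\mid R^{*}(X)=U\}$. The support matroid $M(R)=(U,\mathbf{I}(R))$ is the matroid on $U$ whose independent sets $\mathbf{I}(R)$ are the subsets of inclusion-minimal members of $\mathbf{S}(R)$. For a matroid $(U,\mathbf{I})$, the rank is $r(X)=\max\{|I|\mid I\subseteq X, I\in\mathbf{I}\}$, the closure is $cl(X)=\{e\in U\mid r(X)=r(X\cup\{e\})\}$, and $X$ is closed if $cl(X)=X$. *)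

theory Defs
  imports Main
begin

definition RN :: "'a rel \<Rightarrow> 'a \<Rightarrow> 'a set" where
  "RN R x = {y. (x, y) \<in> R}"

definition lower_approx :: "'a set \<Rightarrow> 'a rel \<Rightarrow> 'a set \<Rightarrow> 'a set" where
  "lower_approx U R X = {x \<in> U. RN R x \<subseteq> X}"

definition upper_approx :: "'a set \<Rightarrow> 'a rel \<Rightarrow> 'a set \<Rightarrow> 'a set" where
  "upper_approx U R X = {x \<in> U. RN R x \<inter> X \<noteq> {}}"

definition supp_sets :: "'a set \<Rightarrow> 'a rel \<Rightarrow> 'a set set" where
  "supp_sets U R = {X. X \<subseteq> U \<and> upper_approx U R X = U}"

definition supp_indep :: "'a set \<Rightarrow> 'a rel \<Rightarrow> 'a set set" where
  "supp_indep U R = {I. \<exists>Y. Y \<in> supp_sets U R \<and>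
      (\<forall>Z. Z \<in> supp_sets U R \<and> Z \<subseteq> Y \<longrightarrow> Z = Y) \<and> I \<subseteq> Y}"

definition mrank :: "'a set set \<Rightarrow> 'a set \<Rightarrow> nat" where
  "mrank Ind X = Max {card I | I. I \<subseteq> X \<and> I \<in> Ind}"

definition mclosure :: "'a set \<Rightarrow> 'a set set \<Rightarrow> 'a set \<Rightarrow> 'a set" where
  "mclosure U Ind X = {e \<in> U. mrank Ind X = mrank Ind (X \<union> {e})}"

definition mclosed :: "'a set \<Rightarrow> 'a set set \<Rightarrow> 'a set \<Rightarrow> bool" where
  "mclosed U Ind X \<longleftrightarrow> mclosure U Ind X = X"

end

theory Submission
  imports Defs
begin

definition ptrans :: "'a set \<Rightarrow> 'a rel \<Rightarrow> 'a set \<Rightarrow> bool" where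
  "ptrans U R I \<longleftrightarrow> I \<subseteq> U \<and> (\<forall>x\<in>I. \<forall>y\<in>I. (x,y)\<in>R \<longrightarrow> x = y)"

lemma indep_imp:
  assumes eq: "equiv U R" and I: "I \<in> supp_indep U R"
  shows "ptrans U R I"
proof -
  from I obtain Y where Y: "Y \<in> supp_sets U R" and
    mn: "\<forall>Z. Z \<in> supp_sets U R \<and> Z \<subseteq> Y \<longrightarrow> Z = Y" and IY: "I \<subseteq> Y"
    unfolding supp_indep_def by blast
  have YU: "Y \<subseteq> U" and up: "upper_approx U R Y = U" using Y by (auto simp: supp_sets_def)
  have "\<forall>x\<in>Y. \<forall>y\<in>Y. (x,y)\<in>R \<longrightarrow> x = y"
  proof (intro ballI impI, rule ccontr)
    fix x y assume xy: "x \<in> Y" "y \<in> Y" "(x,y)\<in>R" "x \<noteq> y"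
    have "upper_approx U R (Y - {y}) = U"
    proof
      show "upper_approx U R (Y - {y}) \<subseteq> U" by (auto simp: upper_approx_def)
      show "U \<subseteq> upper_approx U R (Y - {y})"
      proof
        fix u assume u: "u \<in> U"
        then obtain z where z: "(u,z)\<in>R" "z \<in> Y" using up by (auto simp: upper_approx_def RN_def)
        show "u \<in> upper_approx U R (Y - {y})"
        proof (cases "z = y")
          case True
          then have "(u,x)\<in>R" using z xy eq unfolding equiv_def sym_def trans_def by blast
          then show ?thesis using u xy by (auto simp: upper_approx_def RN_def)
        next
          case False then show ?thesis using u z by (auto simp: upper_approx_def RN_def)
        qed
      qed
    qed
    then have "Y - {y} \<in> supp_sets U R" using YU by (auto simp: supp_sets_def)
    then have "Y - {y} = Y" using mn by blast
    then show False using xy by blast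
  qed
  then show ?thesis using IY YU unfolding ptrans_def by blast
qed

lemma imp_indep:
  assumes eq: "equiv U R" and P: "ptrans U R I"
  shows "I \<in> supp_indep U R"
proof -
  define rep where "rep x = (SOME y. y \<in> R``{x})" for x
  have refl: "\<And>x. x \<in> U \<Longrightarrow> (x,x) \<in> R" using eq unfolding equiv_def refl_on_def by blast
  have RU: "\<And>x y. (x,y) \<in> R \<Longrightarrow> x \<in> U \<and> y \<in> U" using eq unfolding equiv_def refl_on_def by blast
  have sy: "\<And>x y. (x,y) \<in> R \<Longrightarrow> (y,x) \<in> R" using eq unfolding equiv_def sym_def by blast
  have tr: "\<And>x y z. (x,y) \<in> R \<Longrightarrow> (y,z) \<in> R \<Longrightarrow> (x,z) \<in> R" using eq unfolding equiv_def trans_def by blast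
  have repR: "\<And>x. x \<in> U \<Longrightarrow> (x, rep x) \<in> R"
  proof -
    fix x assume "x \<in> U"
    then have "x \<in> R``{x}" using refl by blast
    then have "rep x \<in> R``{x}" unfolding rep_def by (rule someI)
    then show "(x, rep x) \<in> R" by blast
  qed
  have repeq: "\<And>x x'. (x,x') \<in> R \<Longrightarrow> rep x = rep x'"
  proof -
    fix x x' assume "(x,x') \<in> R"
    then have "R``{x} = R``{x'}" using sy tr by blast
    then show "rep x = rep x'" unfolding rep_def by simp
  qed
  define Y where "Y = I \<union> {rep x | x. x \<in> U \<and> R``{x} \<inter> I = {}}"
  have IU: "I \<subseteq> U" and IP: "\<forall>x\<in>I. \<forall>y\<in>I. (x,y)\<in>R \<longrightarrow> x = y" using P by (auto simp: ptrans_def)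
  have YU: "Y \<subseteq> U" using IU repR RU unfolding Y_def by blast
  have YP: "\<forall>x\<in>Y. \<forall>y\<in>Y. (x,y)\<in>R \<longrightarrow> x = y"
  proof (intro ballI impI)
    fix a b assume a: "a \<in> Y" and b: "b \<in> Y" and ab: "(a,b) \<in> R"
    show "a = b"
    proof (cases "a \<in> I")
      case aI: True
      show ?thesis
      proof (cases "b \<in> I")
        case True then show ?thesis using IP aI ab by blast
      next
        case False
        then obtain x where x: "x \<in> U" "R``{x} \<inter> I = {}" "b = rep x" using b unfolding Y_def by blast
        have "(x,a) \<in> R" using repR[OF x(1)] x(3) ab sy tr by blast
        then show ?thesis using x(2) aI by blast
      qed
    next
      case aN: False
      then obtain x where x: "x \<in> U" "R``{x} \<inter> I = {}" "a = rep x" using a unfolding Y_def by blast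
      show ?thesis
      proof (cases "b \<in> I")
        case True
        have "(x,b) \<in> R" using repR[OF x(1)] x(3) ab sy tr by blast
        then show ?thesis using x(2) True by blast
      next
        case False
        then obtain x' where x': "x' \<in> U" "R``{x'} \<inter> I = {}" "b = rep x'" using b unfolding Y_def by blast
        have "(x,x') \<in> R" using repR[OF x(1)] repR[OF x'(1)] x(3) x'(3) ab sy tr by blast
        then show ?thesis using repeq x(3) x'(3) by simp
      qed
    qed
  qed
  have Ycov: "\<And>u. u \<in> U \<Longrightarrow> \<exists>y\<in>Y. (u,y) \<in> R"
  proof -
    fix u assume u: "u \<in> U"
    show "\<exists>y\<in>Y. (u,y) \<in> R"
    proof (cases "R``{u} \<inter> I = {}")
      case True then have "rep u \<in> Y" using u unfolding Y_def by blast
      then show ?thesis using repR[OF u] by blast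
    next
      case False then show ?thesis unfolding Y_def by blast
    qed
  qed
  have YS: "Y \<in> supp_sets U R"
    using YU Ycov unfolding supp_sets_def upper_approx_def RN_def by blast
  have mn: "\<forall>Z. Z \<in> supp_sets U R \<and> Z \<subseteq> Y \<longrightarrow> Z = Y"
  proof (intro allI impI)
    fix Z assume Z: "Z \<in> supp_sets U R \<and> Z \<subseteq> Y"
    show "Z = Y"
    proof
      show "Z \<subseteq> Y" using Z by blast
      show "Y \<subseteq> Z"
      proof
        fix y assume y: "y \<in> Y"
        then have "y \<in> upper_approx U R Z" using Z YU by (auto simp: supp_sets_def)
        then obtain z where z: "z \<in> Z" "(y,z) \<in> R" by (auto simp: upper_approx_def RN_def)
        then have "y = z" using YP y Z by blast
        then show "y \<in> Z" using z by simp
      qed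
    qed
  qed
  have "I \<subseteq> Y" unfolding Y_def by blast
  then show ?thesis unfolding supp_indep_def using YS mn by blast
qed

lemma indep_iff: "equiv U R \<Longrightarrow> I \<in> supp_indep U R \<longleftrightarrow> ptrans U R I"
  using indep_imp imp_indep by blast

lemma rank_props:
  assumes fin: "finite U" and eq: "equiv U R" and X: "X \<subseteq> U"
  shows "\<exists>I. I \<subseteq> X \<and> ptrans U R I \<and> mrank (supp_indep U R) X = card I"
    and "\<And>I. I \<subseteq> X \<Longrightarrow> ptrans U R I \<Longrightarrow> card I \<le> mrank (supp_indep U R) X"
proof -
  define S where "S = {card I | I. I \<subseteq> X \<and> I \<in> supp_indep U R}"
  have MS: "mrank (supp_indep U R) X = Max S" unfolding mrank_def S_def by simp
  have "S \<subseteq> card ` Pow X" unfolding S_def by auto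
  moreover have "finite X" using fin X finite_subset by blast
  ultimately have fS: "finite S" using finite_subset by blast
  have "ptrans U R {}" by (simp add: ptrans_def)
  then have "{} \<in> supp_indep U R" using indep_iff[OF eq] by simp
  then have "card {} \<in> S" unfolding S_def
    by (intro CollectI exI[of _ "{}"]) simp
  then have ne: "S \<noteq> {}" by blast
  have "Max S \<in> S" using Max_in[OF fS ne] .
  then obtain I where I: "I \<subseteq> X" "I \<in> supp_indep U R" "Max S = card I"
    unfolding S_def by (auto simp del: card_0_eq)
  have "ptrans U R I" using indep_imp[OF eq I(2)] .
  then show "\<exists>I. I \<subseteq> X \<and> ptrans U R I \<and> mrank (supp_indep U R) X = card I"
    using I(1,3) MS by (intro exI[of _ I]) simp
  fix I assume I: "I \<subseteq> X" "ptrans U R I"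
  have "I \<in> supp_indep U R" using imp_indep[OF eq I(2)] .
  then have "card I \<in> S" using I(1) unfolding S_def
    by (intro CollectI exI[of _ I]) simp
  then show "card I \<le> mrank (supp_indep U R) X" using MS Max_ge[OF fS] by simp
qed

lemma closure_iff:
  assumes fin: "finite U" and eq: "equiv U R" and X: "X \<subseteq> U" and e: "e \<in> U"
  shows "e \<in> mclosure U (supp_indep U R) X \<longleftrightarrow> (\<exists>x\<in>X. (e,x) \<in> R)"
proof -
  have sy: "\<And>x y. (x,y) \<in> R \<Longrightarrow> (y,x) \<in> R" using eq unfolding equiv_def sym_def by blast
  have tr: "\<And>x y z. (x,y) \<in> R \<Longrightarrow> (y,z) \<in> R \<Longrightarrow> (x,z) \<in> R" using eq unfolding equiv_def trans_def by blast
  have Xe: "X \<union> {e} \<subseteq> U" using X e by blast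
  have finU: "\<And>A. A \<subseteq> U \<Longrightarrow> finite A" using fin finite_subset by blast
  show ?thesis
  proof
    assume "e \<in> mclosure U (supp_indep U R) X"
    then have req: "mrank (supp_indep U R) X = mrank (supp_indep U R) (X \<union> {e})"
      by (simp add: mclosure_def)
    show "\<exists>x\<in>X. (e,x) \<in> R"
    proof (rule ccontr)
      assume nr: "\<not> (\<exists>x\<in>X. (e,x) \<in> R)"
      obtain I where I: "I \<subseteq> X" "ptrans U R I" "mrank (supp_indep U R) X = card I"
        using rank_props(1)[OF fin eq X] by blast
      have ee: "(e,e) \<in> R" using e eq unfolding equiv_def refl_on_def by blast
      have eI: "e \<notin> I" using nr I(1) ee by blast
      have IU: "I \<subseteq> U" and IP: "\<forall>a\<in>I. \<forall>b\<in>I. (a,b)\<in>R \<longrightarrow> a = b"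
        using I(2) unfolding ptrans_def by blast+
      have n1: "\<And>b. b \<in> I \<Longrightarrow> (e,b) \<notin> R" using nr I(1) by blast
      have n2: "\<And>b. b \<in> I \<Longrightarrow> (b,e) \<notin> R" using n1 sy by blast
      have "insert e I \<subseteq> U" using IU e by blast
      moreover have "\<forall>a\<in>insert e I. \<forall>b\<in>insert e I. (a,b)\<in>R \<longrightarrow> a = b"
        using IP n1 n2 by blast
      ultimately have "ptrans U R (insert e I)" unfolding ptrans_def by blast
      then have "card (insert e I) \<le> mrank (supp_indep U R) (X \<union> {e})"
        using rank_props(2)[OF fin eq Xe] I(1) by blast
      moreover have "card (insert e I) = card I + 1"
      proof -
        have "finite I" using finU IU .
        then show ?thesis using eI by (simp add: card_insert_disjoint)
      qed
      ultimately show False using req I(3) by simp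
    qed
  next
    assume "\<exists>x\<in>X. (e,x) \<in> R"
    then obtain x where x: "x \<in> X" "(e,x) \<in> R" by blast
    obtain I where I: "I \<subseteq> X \<union> {e}" "ptrans U R I" "mrank (supp_indep U R) (X \<union> {e}) = card I"
      using rank_props(1)[OF fin eq Xe] by blast
    have le: "card I \<le> mrank (supp_indep U R) X"
    proof (cases "e \<in> I \<and> e \<notin> X")
      case False
      then have "I \<subseteq> X" using I(1) by blast
      then show ?thesis using rank_props(2)[OF fin eq X] I(2) by blast
    next
      case True
      have xI: "x \<notin> I" using True x I(2) unfolding ptrans_def by blast
      let ?J = "insert x (I - {e})"
      have IP: "\<forall>a\<in>I. \<forall>b\<in>I. (a,b)\<in>R \<longrightarrow> a = b" and IU: "I \<subseteq> U"
        using I(2) unfolding ptrans_def by blast+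
      have xb: "\<And>b. b \<in> I - {e} \<Longrightarrow> (x,b) \<notin> R"
      proof
        fix b assume b: "b \<in> I - {e}" "(x,b) \<in> R"
        then have "(e,b) \<in> R" using tr x(2) by blast
        then show False using IP True b by blast
      qed
      have "?J \<subseteq> U" using IU x X by blast
      moreover have "\<forall>a\<in>?J. \<forall>b\<in>?J. (a,b)\<in>R \<longrightarrow> a = b"
      proof (intro ballI impI)
        fix a b assume a: "a \<in> ?J" and b: "b \<in> ?J" and ab: "(a,b) \<in> R"
        show "a = b"
        proof (cases "a = x")
          case True
          then show ?thesis using xb b ab by blast
        next
          case False
          then have aI: "a \<in> I - {e}" using a by blast
          show ?thesis
          proof (cases "b = x")
            case True then show ?thesis using xb[OF aI] sy ab by blast
          next
            case False then show ?thesis using IP aI b ab by blast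
          qed
        qed
      qed
      ultimately have "ptrans U R ?J" unfolding ptrans_def by blast
      moreover have "?J \<subseteq> X" using I(1) x(1) by auto
      moreover have "card ?J = card I"
      proof -
        have fI: "finite I" using finU I(2) unfolding ptrans_def by blast
        have "card ?J = Suc (card (I - {e}))" using fI xI by (simp add: card_insert_disjoint)
        also have "\<dots> = card I" using card_Suc_Diff1[OF fI, of e] True by simp
        finally show ?thesis .
      qed
      ultimately show ?thesis using rank_props(2)[OF fin eq X, of ?J] by simp
    qed
    obtain J where J: "J \<subseteq> X" "ptrans U R J" "mrank (supp_indep U R) X = card J"
      using rank_props(1)[OF fin eq X] by blast
    have "card J \<le> mrank (supp_indep U R) (X \<union> {e})"
      using rank_props(2)[OF fin eq Xe] J by blast
    then show "e \<in> mclosure U (supp_indep U R) X"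
      using le I(3) J(3) e by (simp add: mclosure_def)
  qed
qed

theorem corollary2:
  fixes U :: "'a set" and R :: "'a rel" and X :: "'a set"
  assumes "finite U" and "U \<noteq> {}" and "equiv U R" and "X \<subseteq> U"
  shows "mclosed U (supp_indep U R) X \<longleftrightarrow> lower_approx U R X = X"
proof -
  note ci = closure_iff[OF assms(1) assms(3) assms(4)]
  have refl: "\<And>x. x \<in> U \<Longrightarrow> (x,x) \<in> R" using assms(3) unfolding equiv_def refl_on_def by blast
  have RU: "\<And>x y. (x,y) \<in> R \<Longrightarrow> x \<in> U \<and> y \<in> U" using assms(3) unfolding equiv_def refl_on_def by blast
  have sy: "\<And>x y. (x,y) \<in> R \<Longrightarrow> (y,x) \<in> R" using assms(3) unfolding equiv_def sym_def by blast
  have cl: "mclosure U (supp_indep U R) X = {e \<in> U. \<exists>x\<in>X. (e,x) \<in> R}"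
    using ci unfolding mclosure_def by blast
  show ?thesis
    unfolding mclosed_def cl
  proof
    assume C: "{e \<in> U. \<exists>x\<in>X. (e, x) \<in> R} = X"
    show "lower_approx U R X = X"
    proof
      show "lower_approx U R X \<subseteq> X" using refl unfolding lower_approx_def RN_def by blast
      show "X \<subseteq> lower_approx U R X"
      proof
        fix x assume x: "x \<in> X"
        have "RN R x \<subseteq> X"
        proof
          fix y assume "y \<in> RN R x"
          then have "(x,y) \<in> R" by (simp add: RN_def)
          then have "y \<in> U" "(y,x) \<in> R" using RU sy by blast+
          then have "y \<in> {e \<in> U. \<exists>x\<in>X. (e, x) \<in> R}" using x by blast
          then show "y \<in> X" using C by simp
        qed
        then show "x \<in> lower_approx U R X" using x assms(4) unfolding lower_approx_def by blast
      qed
    qed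
  next
    assume L: "lower_approx U R X = X"
    show "{e \<in> U. \<exists>x\<in>X. (e, x) \<in> R} = X"
    proof
      show "X \<subseteq> {e \<in> U. \<exists>x\<in>X. (e, x) \<in> R}" using assms(4) refl by blast
      show "{e \<in> U. \<exists>x\<in>X. (e, x) \<in> R} \<subseteq> X"
      proof
        fix e assume "e \<in> {e \<in> U. \<exists>x\<in>X. (e, x) \<in> R}"
        then obtain x where x: "x \<in> X" "(e,x) \<in> R" by blast
        then have "x \<in> lower_approx U R X" using L by simp
        then have "RN R x \<subseteq> X" unfolding lower_approx_def by blast
        moreover have "e \<in> RN R x" using sy x(2) by (simp add: RN_def)
        ultimately show "e \<in> X" by blast
      qed
    qed
  qed
qed

end
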